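(* Let $D\ge2$ be an integer, $x\ge0$, and set $\lambda^{(0)}_{kj}=\frac{1}{D^2+x}+\delta_{j0}\delta_{k0}\frac{x}{D^2+x}$ for $k,j\in\{0,\dots,D-1\}$. Define for $n\ge0$ the unnormalized quantities $$\lambda^{(n)}_{kj}=\sum_{k'=0}^{D-1}e^{-2\pi i kk'/D}\Big[\sum_{k''=0}^{D-1}e^{-2\pi i k''k'/D}\lambda^{(0)}_{k''j}\Big]^{2^n},$$ and normalize them to sum to 1 over all $k,j$. Then the normalized value is $$\lambda^{(n)}_{00}=\frac{(x+D)^{2^n}+(D-1)x^{2^n}}{D\big[(x+D)^{2^n}+(D-1)D^{2^n}\big]}.$$ In particular, for $x=D$ one has $\lambda^{(n)}_{00}=1/D$ for all $n$, i.e. it is a fixed point of the iteration.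
   Context: This iteration describes the action of $n$ rounds of a bipartite purification protocol for $D$-dimensional systems on a Bell-diagonal state with diagonal elements $\lambda_{kj}$; it is applied with $D=2^{N/2}$ to a maximally depolarized $N$-qubit linear cluster state split into two halves of $N/2$ qubits. *)

theory Defs
  imports Complex_Main
begin

definition lambda0 :: "nat \<Rightarrow> real \<Rightarrow> nat \<Rightarrow> nat \<Rightarrow> complex" where
  "lambda0 D x k j =
     complex_of_real (1 / (real D ^ 2 + x)
       + (if j = 0 \<and> k = 0 then x / (real D ^ 2 + x) else 0))"

definition lambda_unnorm :: "nat \<Rightarrow> real \<Rightarrow> nat \<Rightarrow> nat \<Rightarrow> nat \<Rightarrow> complex" where
  "lambda_unnorm D x n k j =
     (\<Sum>k'<D. exp (- 2 * pi * \<i> * of_nat (k * k') / of_nat D) *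
        (\<Sum>k''<D. exp (- 2 * pi * \<i> * of_nat (k'' * k') / of_nat D) * lambda0 D x k'' j) ^ (2 ^ n))"

definition lambda_norm :: "nat \<Rightarrow> real \<Rightarrow> nat \<Rightarrow> nat \<Rightarrow> nat \<Rightarrow> complex" where
  "lambda_norm D x n k j =
     lambda_unnorm D x n k j / (\<Sum>k1<D. \<Sum>j1<D. lambda_unnorm D x n k1 j1)"

end

theory Submission imports Defs "HOL-Analysis.Analysis" begin

lemma geo:
  fixes D m :: nat
  assumes "m < D"
  shows "(\<Sum>k<D. exp (- 2 * pi * \<i> * of_nat (k * m) / of_nat D)) = (if m = 0 then of_nat D else 0)"
proof (cases "m = 0")
  case True then show ?thesis by simp
next
  case False
  define w where "w = exp (- 2 * pi * \<i> * of_nat m / of_nat D)"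
  have e: "exp (- 2 * pi * \<i> * of_nat (k * m) / of_nat D) = w ^ k" for k
    unfolding w_def exp_of_nat_mult[symmetric] by (simp add: algebra_simps)
  have D0: "D > 0" using assms by simp
  have wD: "w ^ D = 1"
  proof -
    have "w ^ D = exp (of_nat D * (- 2 * pi * \<i> * of_nat m / of_nat D))"
      unfolding w_def exp_of_nat_mult by simp
    also have "\<dots> = exp (- 2 * pi * \<i> * of_nat m)" using D0 by simp
    also have "\<dots> = 1" by (simp add: exp_eq_1) (metis mult.commute mult_minus_left of_int_minus of_int_of_nat_eq)
    finally show ?thesis .
  qed
  have w1: "w \<noteq> 1"
  proof
    assume "w = 1"
    then obtain n :: int where n: "- 2 * pi * real m / real D = of_int (2 * n) * pi"
      unfolding w_def exp_eq_1 by auto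
    then have "2 * (pi * (- real m / real D)) = 2 * (pi * of_int n)" by (simp add: algebra_simps)
    then have "pi * (- real m / real D) = pi * of_int n" by simp
    then have h: "- (pi * real m / real D) = pi * real_of_int n" by simp
    have "- (real m / real D) = of_int n" proof -
      have "pi * (- (real m / real D)) = pi * real_of_int n" using h by simp
      then show ?thesis by (rule mult_left_cancel[THEN iffD1, OF pi_neq_zero])
    qed
    then have "real m / real D = - of_int n" by linarith
    then have "real m = - of_int n * real D" using D0 by (simp add: divide_eq_eq)
    then have "real_of_int (int m) = real_of_int (- n * int D)" by simp
    then have "int m = - n * int D" by (simp only: of_int_eq_iff)
    then have mn: "int m = - (n * int D)" by simp
    have mpos: "int m > 0" "int m < int D" using False assms by auto
    show False
    proof (cases "n \<ge> 0")
      case True then have "n * int D \<ge> 0" by simp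
      then show False using mn mpos by linarith
    next
      case False then have "- n \<ge> 1" by simp
      then have "- n * int D \<ge> 1 * int D" by (rule mult_right_mono) simp
      then show False using mn mpos by simp
    qed
  qed
  have "(\<Sum>k<D. exp (- 2 * pi * \<i> * of_nat (k * m) / of_nat D)) = (\<Sum>k<D. w ^ k)"
    by (simp only: e)
  also have "\<dots> = 0" using w1 wD by (simp add: sum_gp_strict)
  finally show ?thesis using False by simp
qed
lemma inner:
  fixes D m j :: nat and x :: real
  assumes "m < D"
  shows "(\<Sum>k<D. exp (- 2 * pi * \<i> * of_nat (k * m) / of_nat D) * lambda0 D x k j)
     = complex_of_real (1 / (real D ^ 2 + x) * real D * (if m = 0 then 1 else 0)
          + (if j = 0 then x / (real D ^ 2 + x) else 0))"
proof -
  define c where "c = 1 / (real D ^ 2 + x)"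
  define a where "a = x / (real D ^ 2 + x)"
  define e where "e k = exp (- 2 * pi * \<i> * of_nat (k * m) / of_nat D)" for k
  have sp: "lambda0 D x k j = of_real c + (if k = 0 then (if j = 0 then of_real a else 0) else 0)" for k
    by (simp add: lambda0_def c_def a_def)
  have "(\<Sum>k<D. e k * lambda0 D x k j)
      = (\<Sum>k<D. e k * of_real c) + (\<Sum>k<D. (if k = 0 then e k * (if j = 0 then of_real a else 0) else 0))"
    unfolding sp distrib_left sum.distrib by (intro arg_cong2[where f="(+)"] sum.cong) auto
  also have "(\<Sum>k<D. e k * of_real c) = (\<Sum>k<D. e k) * of_real c"
    by (simp add: sum_distrib_right)
  also have "(\<Sum>k<D. e k) = (if m = 0 then of_nat D else 0)"
    unfolding e_def using geo[OF assms] .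
  also have "(\<Sum>k<D. (if k = 0 then e k * (if j = 0 then of_real a else 0) else 0))
      = (if j = 0 then of_real a else 0)"
    using assms by (simp add: sum.delta' e_def)
  finally show ?thesis unfolding e_def c_def [symmetric] a_def [symmetric] by simp
qed

lemma unnorm00:
  fixes D n :: nat and x :: real
  assumes "D > 0"
  shows "lambda_unnorm D x n 0 0 = complex_of_real
     ((1 / (real D ^ 2 + x) * real D + x / (real D ^ 2 + x)) ^ (2 ^ n)
       + (real D - 1) * (x / (real D ^ 2 + x)) ^ (2 ^ n))"
proof -
  obtain d where d: "D = Suc d" using assms by (cases D) auto
  have "lambda_unnorm D x n 0 0 = (\<Sum>k'<D. complex_of_real (1 / (real D ^ 2 + x) * real D * (if k' = 0 then 1 else 0)
          + x / (real D ^ 2 + x)) ^ (2 ^ n))"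
    unfolding lambda_unnorm_def
  proof (intro sum.cong refl)
    fix k' assume "k' \<in> {..<D}"
    then have "k' < D" by simp
    show "exp (- 2 * pi * \<i> * of_nat (0 * k') / of_nat D) *
        (\<Sum>k''<D. exp (- 2 * pi * \<i> * of_nat (k'' * k') / of_nat D) * lambda0 D x k'' 0) ^ (2 ^ n) =
        complex_of_real (1 / (real D ^ 2 + x) * real D * (if k' = 0 then 1 else 0) + x / (real D ^ 2 + x)) ^ (2 ^ n)"
      by (simp only: inner[OF \<open>k' < D\<close>]) simp
  qed
  also have "\<dots> = complex_of_real ((1 / (real D ^ 2 + x) * real D + x / (real D ^ 2 + x)) ^ (2 ^ n))
      + (\<Sum>k'<d. complex_of_real (x / (real D ^ 2 + x)) ^ (2 ^ n))"
    unfolding d sum.lessThan_Suc_shift by simp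
  also have "\<dots> = complex_of_real
     ((1 / (real D ^ 2 + x) * real D + x / (real D ^ 2 + x)) ^ (2 ^ n)
       + (real D - 1) * (x / (real D ^ 2 + x)) ^ (2 ^ n))"
    by (simp add: d)
  finally show ?thesis .
qed

lemma total:
  fixes D n :: nat and x :: real
  assumes "D > 0"
  shows "(\<Sum>k1<D. \<Sum>j1<D. lambda_unnorm D x n k1 j1) = complex_of_real
     (real D * ((1 / (real D ^ 2 + x) * real D + x / (real D ^ 2 + x)) ^ (2 ^ n)
       + (real D - 1) * (1 / (real D ^ 2 + x) * real D) ^ (2 ^ n)))"
proof -
  obtain d where d: "D = Suc d" using assms by (cases D) auto
  define T where "T k' j = (\<Sum>k''<D. exp (- 2 * pi * \<i> * of_nat (k'' * k') / of_nat D) * lambda0 D x k'' j) ^ (2 ^ n)" for k' j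
  define e where "e k = exp (- 2 * pi * \<i> * of_nat k / of_nat D)" for k
  have "(\<Sum>k1<D. \<Sum>j1<D. lambda_unnorm D x n k1 j1) = (\<Sum>j1<D. \<Sum>k1<D. \<Sum>k'<D. e (k1 * k') * T k' j1)"
    unfolding lambda_unnorm_def T_def e_def by (rule sum.swap)
  also have "\<dots> = (\<Sum>j1<D. \<Sum>k'<D. (\<Sum>k1<D. e (k1 * k')) * T k' j1)"
    unfolding sum_distrib_right by (rule sum.cong[OF refl], rule sum.swap)
  also have "\<dots> = (\<Sum>j1<D. \<Sum>k'<D. (if k' = 0 then of_nat D * T 0 j1 else 0))"
  proof (intro sum.cong refl)
    fix j1 k' assume "j1 \<in> {..<D}" "k' \<in> {..<D}"
    then have "k' < D" by simp
    show "(\<Sum>k1<D. e (k1 * k')) * T k' j1 = (if k' = 0 then of_nat D * T 0 j1 else 0)"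
      unfolding e_def geo[OF \<open>k' < D\<close>] by simp
  qed
  also have "\<dots> = (\<Sum>j1<D. of_nat D * T 0 j1)"
    using assms by (simp add: sum.delta')
  also have "\<dots> = (\<Sum>j1<D. of_nat D * complex_of_real (1 / (real D ^ 2 + x) * real D
          + (if j1 = 0 then x / (real D ^ 2 + x) else 0)) ^ (2 ^ n))"
    unfolding T_def using assms by (intro sum.cong refl) (simp only: inner, simp)
  also have "\<dots> = complex_of_real
     (real D * ((1 / (real D ^ 2 + x) * real D + x / (real D ^ 2 + x)) ^ (2 ^ n)
       + (real D - 1) * (1 / (real D ^ 2 + x) * real D) ^ (2 ^ n)))"
    unfolding d sum.lessThan_Suc_shift by (simp add: algebra_simps)
  finally show ?thesis .
qed

lemma real_part:
  fixes D :: real and x :: real and N :: nat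
  assumes "D \<ge> 2" and "x \<ge> 0"
  shows "((1 / (D ^ 2 + x) * D + x / (D ^ 2 + x)) ^ N + (D - 1) * (x / (D ^ 2 + x)) ^ N) /
      (D * ((1 / (D ^ 2 + x) * D + x / (D ^ 2 + x)) ^ N + (D - 1) * (1 / (D ^ 2 + x) * D) ^ N))
    = ((x + D) ^ N + (D - 1) * x ^ N) / (D * ((x + D) ^ N + (D - 1) * D ^ N))"
proof -
  define s where "s = D ^ 2 + x"
  have s0: "s > 0" proof -
    have "D ^ 2 > 0" using assms by simp
    then show ?thesis unfolding s_def using assms by linarith
  qed
  have e1: "1 / (D ^ 2 + x) * D + x / (D ^ 2 + x) = (x + D) / s" unfolding s_def by (simp add: add_divide_distrib add.commute)
  have e2: "x / (D ^ 2 + x) = x / s" unfolding s_def by simp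
  have e3: "1 / (D ^ 2 + x) * D = D / s" unfolding s_def by simp
  have sN: "s ^ N > 0" using s0 by simp
  have g: "(P / t + a * (Q / t)) / (d * (P / t + a * (R / t))) = (P + a * Q) / (d * (P + a * R))"
    if "t > 0" for P Q R a d t :: real
  proof -
    have "P / t + a * (Q / t) = (P + a * Q) / t" by (simp add: add_divide_distrib)
    moreover have "d * (P / t + a * (R / t)) = (d * (P + a * R)) / t"
      by (simp add: add_divide_distrib distrib_left)
    ultimately show ?thesis using that by simp
  qed
  show ?thesis unfolding e1 unfolding e2 e3 power_divide by (rule g[OF sN])
qed

theorem mainTheorem10:
  fixes D :: nat and x :: real and n :: nat
  assumes "D \<ge> 2" and "x \<ge> 0"
  shows "lambda_norm D x n 0 0 =
           complex_of_real (((x + real D) ^ (2 ^ n) + (real D - 1) * x ^ (2 ^ n)) /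
             (real D * ((x + real D) ^ (2 ^ n) + (real D - 1) * real D ^ (2 ^ n))))
    \<and> lambda_norm D (real D) n 0 0 = complex_of_real (1 / real D)"
proof -
  have D0: "D > 0" using assms by simp
  have gen: "lambda_norm D y n 0 0 =
           complex_of_real (((y + real D) ^ (2 ^ n) + (real D - 1) * y ^ (2 ^ n)) /
             (real D * ((y + real D) ^ (2 ^ n) + (real D - 1) * real D ^ (2 ^ n))))" if y: "y \<ge> 0" for y
    unfolding lambda_norm_def unnorm00[OF D0] total[OF D0] of_real_divide[symmetric]
    using real_part[of "real D" y "2 ^ n"] assms y by simp
  have "lambda_norm D (real D) n 0 0 = complex_of_real (((real D + real D) ^ (2 ^ n) + (real D - 1) * real D ^ (2 ^ n)) /
             (real D * ((real D + real D) ^ (2 ^ n) + (real D - 1) * real D ^ (2 ^ n))))"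
    using gen[of "real D"] by simp
  also have "\<dots> = complex_of_real (1 / real D)"
  proof -
    have "(real D + real D) ^ (2 ^ n) + (real D - 1) * real D ^ (2 ^ n) > 0"
      using assms by (intro add_pos_nonneg) auto
    then show ?thesis by simp
  qed
  finally have "lambda_norm D (real D) n 0 0 = complex_of_real (1 / real D)" .
  then show ?thesis using gen[OF assms(2)] by blast
qed

end
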